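(* Let $n\ge 2$ and let $d=(d_1,\dots,d_n)$ with $d_1=\tfrac34$, $d_2=\tfrac14$ and $d_i=0$ for $3\le i\le n$. Then for every simple game $\chi$ on $N=\{1,\dots,n\}$, $$\|\mathcal{BZ}(\chi)-d\|_1=\sum_{i=1}^n\left|\mathcal{BZ}(\chi,i)-d_i\right|\ge\frac19.$$
   Context: A simple game on $N=\{1,\dots,n\}$ is a monotone Boolean function $\chi:2^N\to\{0,1\}$ with $\chi(\emptyset)=0$ and $\chi(N)=1$. An $i$-swing is a set $U\subseteq N\setminus\{i\}$ with $\chi(U)=0$ and $\chi(U\cup\{i\})=1$. The Banzhaf index is $\mathcal{BZ}(\chi,i)=\eta_i/\sum_{k=1}^n\eta_k$, where $\eta_i$ is the number of $i$-swings, and $\mathcal{BZ}(\chi)=(\mathcal{BZ}(\chi,1),\dots,\mathcal{BZ}(\chi,n))$. *)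

theory Defs
  imports Complex_Main
begin

definition simple_game :: "nat \<Rightarrow> (nat set \<Rightarrow> bool) \<Rightarrow> bool" where
  "simple_game n \<chi> \<longleftrightarrow>
     (\<forall>S T. S \<subseteq> T \<and> T \<subseteq> {1..n} \<longrightarrow> \<chi> S \<longrightarrow> \<chi> T) \<and>
     \<not> \<chi> {} \<and> \<chi> {1..n}"

definition swings :: "nat \<Rightarrow> (nat set \<Rightarrow> bool) \<Rightarrow> nat \<Rightarrow> nat" where
  "swings n \<chi> i = card {U. U \<subseteq> {1..n} - {i} \<and> \<not> \<chi> U \<and> \<chi> (insert i U)}"

definition banzhaf :: "nat \<Rightarrow> (nat set \<Rightarrow> bool) \<Rightarrow> nat \<Rightarrow> real" where
  "banzhaf n \<chi> i = real (swings n \<chi> i) / (\<Sum>k\<in>{1..n}. real (swings n \<chi> k))"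

end

theory Submission
  imports Defs
begin

definition cnt :: "nat set \<Rightarrow> (nat set \<Rightarrow> bool) \<Rightarrow> nat" where
  "cnt M G = card {U. U \<subseteq> M \<and> G U}"

definition bd :: "nat set \<Rightarrow> (nat set \<Rightarrow> bool) \<Rightarrow> nat" where
  "bd M G = (\<Sum>j\<in>M. cnt (M - {j}) (\<lambda>U. G U \<noteq> G (insert j U)))"

lemma cnt_finite: "finite M \<Longrightarrow> finite {U. U \<subseteq> M \<and> G U}"
  by (rule finite_subset[of _ "Pow M"]) auto

lemma cnt_split:
  assumes "finite A" "a \<in> A"
  shows "cnt A P = cnt (A - {a}) P + cnt (A - {a}) (\<lambda>U. P (insert a U))"
proof -
  have eq: "{U. U \<subseteq> A \<and> P U} = {U. U \<subseteq> A - {a} \<and> P U} \<union> insert a ` {U. U \<subseteq> A - {a} \<and> P (insert a U)}"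
  proof (rule set_eqI, rule iffI)
    fix U assume U: "U \<in> {U. U \<subseteq> A \<and> P U}"
    show "U \<in> {U. U \<subseteq> A - {a} \<and> P U} \<union> insert a ` {U. U \<subseteq> A - {a} \<and> P (insert a U)}"
    proof (cases "a \<in> U")
      case True
      hence "U = insert a (U - {a})" by auto
      moreover have "U - {a} \<in> {U. U \<subseteq> A - {a} \<and> P (insert a U)}" using U True
        by (auto simp: insert_absorb)
      ultimately show ?thesis by blast
    next
      case False
      then show ?thesis using U by auto
    qed
  next
    fix U assume "U \<in> {U. U \<subseteq> A - {a} \<and> P U} \<union> insert a ` {U. U \<subseteq> A - {a} \<and> P (insert a U)}"
    then show "U \<in> {U. U \<subseteq> A \<and> P U}" using assms(2) by auto
  qed
  have inj: "inj_on (insert a) {U. U \<subseteq> A - {a} \<and> P (insert a U)}"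
    by (rule inj_onI) (metis Diff_insert_absorb insert_subset mem_Collect_eq subset_Diff_insert)
  have disj: "{U. U \<subseteq> A - {a} \<and> P U} \<inter> insert a ` {U. U \<subseteq> A - {a} \<and> P (insert a U)} = {}"
    by auto
  have f1: "finite {U. U \<subseteq> A - {a} \<and> P U}" using assms(1) by (intro cnt_finite) auto
  have f2: "finite (insert a ` {U. U \<subseteq> A - {a} \<and> P (insert a U)})" using assms(1) cnt_finite by auto
  show ?thesis unfolding cnt_def eq
    using card_Un_disjoint[OF f1 f2 disj] card_image[OF inj] by simp
qed

lemma cnt_le: "finite M \<Longrightarrow> cnt M P \<le> 2 ^ card M"
  unfolding cnt_def
  by (metis (no_types, lifting) Pow_iff card_Pow card_mono finite_Pow_iff mem_Collect_eq subsetI)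

lemma cnt_mono: "finite M \<Longrightarrow> (\<And>U. U \<subseteq> M \<Longrightarrow> P U \<Longrightarrow> Q U) \<Longrightarrow> cnt M P \<le> cnt M Q"
  unfolding cnt_def by (rule card_mono) (auto intro: cnt_finite)

lemma cnt_cong: "(\<And>U. U \<subseteq> M \<Longrightarrow> P U = Q U) \<Longrightarrow> cnt M P = cnt M Q"
  unfolding cnt_def by (metis (mono_tags, lifting))

lemma cnt_or: "finite M \<Longrightarrow> cnt M (\<lambda>U. P U \<or> Q U) \<le> cnt M P + cnt M Q"
proof -
  assume f: "finite M"
  have "{U. U \<subseteq> M \<and> (P U \<or> Q U)} = {U. U \<subseteq> M \<and> P U} \<union> {U. U \<subseteq> M \<and> Q U}" by auto
  then show ?thesis unfolding cnt_def using card_Un_le by simp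
qed

lemma cnt_diff:
  assumes "finite M" "\<And>U. U \<subseteq> M \<Longrightarrow> P U \<Longrightarrow> Q U"
  shows "int (cnt M (\<lambda>U. \<not> P U \<and> Q U)) = int (cnt M Q) - int (cnt M P)"
proof -
  have eq: "{U. U \<subseteq> M \<and> (\<not> P U \<and> Q U)} = {U. U \<subseteq> M \<and> Q U} - {U. U \<subseteq> M \<and> P U}" by auto
  have sub: "{U. U \<subseteq> M \<and> P U} \<subseteq> {U. U \<subseteq> M \<and> Q U}" using assms(2) by auto
  have "card ({U. U \<subseteq> M \<and> Q U} - {U. U \<subseteq> M \<and> P U}) = card {U. U \<subseteq> M \<and> Q U} - card {U. U \<subseteq> M \<and> P U}"
    by (rule card_Diff_subset) (use sub cnt_finite[OF assms(1)] in \<open>auto intro: finite_subset\<close>)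
  moreover have "card {U. U \<subseteq> M \<and> P U} \<le> card {U. U \<subseteq> M \<and> Q U}"
    by (rule card_mono[OF cnt_finite[OF assms(1)] sub])
  ultimately show ?thesis unfolding cnt_def eq by simp
qed

lemma poincare_arith:
  fixes x y b0 b1 d N :: real
  assumes "0 \<le> x" "x \<le> N" "0 \<le> y" "y \<le> N" "d \<ge> x - y" "d \<ge> y - x"
    and "2*x*(N-x) \<le> b0*N" "2*y*(N-y) \<le> b1*N"
  shows "2*(x+y)*(2*N - (x+y)) \<le> (d + b0 + b1) * (2*N)"
proof -
  have id: "(x+y)*(2*N-(x+y)) = 2*x*(N-x) + 2*y*(N-y) + (x-y)*(x-y)" by (simp add: algebra_simps)
  have "(x-y)*(x-y) \<le> d*N"
  proof (cases "x \<le> y")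
    case True
    have "(y-x)*(y-x) \<le> d*N" using assms True by (intro mult_mono) auto
    then show ?thesis by (simp add: algebra_simps)
  next
    case False
    have "(x-y)*(x-y) \<le> d*N" using assms False by (intro mult_mono) auto
    then show ?thesis .
  qed
  hence "(x+y)*(2*N-(x+y)) \<le> d*N + b0*N + b1*N" using id assms(7,8) by linarith
  hence "2*((x+y)*(2*N-(x+y))) \<le> 2*(d*N + b0*N + b1*N)" by simp
  then show ?thesis by (simp add: algebra_simps)
qed

lemma poincare:
  assumes "finite M"
  shows "2 * real (cnt M G) * (2 ^ card M - real (cnt M G)) \<le> real (bd M G) * 2 ^ card M"
  using assms
proof (induction M arbitrary: G rule: finite_induct)
  case empty
  have "cnt {} G \<le> 1" using cnt_le[of "{}" G] by simp
  then have "cnt {} G = 0 \<or> cnt {} G = 1" by auto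
  then show ?case by (auto simp: bd_def)
next
  case (insert a M)
  define G1 where "G1 = (\<lambda>U. G (insert a U))"
  let ?x = "cnt M G" and ?y = "cnt M G1" and ?d = "cnt M (\<lambda>U. G U \<noteq> G (insert a U))"
  have AM: "insert a M - {a} = M" using insert.hyps by auto
  have c: "cnt (insert a M) G = ?x + ?y"
    using cnt_split[of "insert a M" a G] insert.hyps AM by (simp add: G1_def)
  have b: "bd (insert a M) G = ?d + bd M G + bd M G1"
  proof -
    have "bd (insert a M) G = ?d + (\<Sum>j\<in>M. cnt (insert a M - {j}) (\<lambda>U. G U \<noteq> G (insert j U)))"
      unfolding bd_def using insert.hyps AM by simp
    also have "(\<Sum>j\<in>M. cnt (insert a M - {j}) (\<lambda>U. G U \<noteq> G (insert j U)))
       = (\<Sum>j\<in>M. cnt (M - {j}) (\<lambda>U. G U \<noteq> G (insert j U)) + cnt (M - {j}) (\<lambda>U. G1 U \<noteq> G1 (insert j U)))"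
    proof (rule sum.cong[OF refl])
      fix j assume j: "j \<in> M"
      have e1: "insert a M - {j} - {a} = M - {j}" using insert.hyps j by auto
      have "cnt (insert a M - {j}) (\<lambda>U. G U \<noteq> G (insert j U)) =
         cnt (M - {j}) (\<lambda>U. G U \<noteq> G (insert j U)) + cnt (M - {j}) (\<lambda>U. G (insert a U) \<noteq> G (insert j (insert a U)))"
        using cnt_split[of "insert a M - {j}" a] insert.hyps j e1 by auto
      also have "cnt (M - {j}) (\<lambda>U. G (insert a U) \<noteq> G (insert j (insert a U))) = cnt (M - {j}) (\<lambda>U. G1 U \<noteq> G1 (insert j U))"
        by (simp add: G1_def insert_commute)
      finally show "cnt (insert a M - {j}) (\<lambda>U. G U \<noteq> G (insert j U)) =
         cnt (M - {j}) (\<lambda>U. G U \<noteq> G (insert j U)) + cnt (M - {j}) (\<lambda>U. G1 U \<noteq> G1 (insert j U))" .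
    qed
    also have "\<dots> = bd M G + bd M G1" unfolding bd_def by (simp add: sum.distrib)
    finally show ?thesis by simp
  qed
  have d1: "?x \<le> ?d + ?y"
  proof -
    have "?x \<le> cnt M (\<lambda>U. (G U \<noteq> G (insert a U)) \<or> G1 U)"
      using insert.hyps by (intro cnt_mono) (auto simp: G1_def)
    also have "\<dots> \<le> ?d + ?y" by (rule cnt_or[OF insert.hyps(1)])
    finally show ?thesis .
  qed
  have d2: "?y \<le> ?d + ?x"
  proof -
    have "?y \<le> cnt M (\<lambda>U. (G U \<noteq> G (insert a U)) \<or> G U)"
      using insert.hyps by (intro cnt_mono) (auto simp: G1_def)
    also have "\<dots> \<le> ?d + ?x" by (rule cnt_or[OF insert.hyps(1)])
    finally show ?thesis .
  qed
  have xl: "real ?x \<le> 2 ^ card M" using cnt_le[OF insert.hyps(1), of G] by (simp add: of_nat_le_iff[symmetric])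
  have yl: "real ?y \<le> 2 ^ card M" using cnt_le[OF insert.hyps(1), of G1] by (simp add: of_nat_le_iff[symmetric])
  have "2 * (real ?x + real ?y) * (2 * 2 ^ card M - (real ?x + real ?y))
      \<le> (real ?d + real (bd M G) + real (bd M G1)) * (2 * 2 ^ card M)"
  proof (rule poincare_arith)
    show "real ?x - real ?y \<le> real ?d" using d1 by linarith
    show "real ?y - real ?x \<le> real ?d" using d2 by linarith
  qed (use insert.IH[of G] insert.IH[of G1] xl yl in simp_all)
  then show ?case using c b insert.hyps by (simp add: algebra_simps)
qed


lemma real_ineq:
  fixes x y S f1 f2 K A :: real
  assumes K: "K > 0" and xy: "x - y = 2*f1 - 2*f2" and y: "y \<ge> 0" and x: "x \<le> 2*K"
    and f1: "0 \<le> f1" "f1 \<le> K" and f2: "0 \<le> f2" "f2 \<le> K"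
    and S: "S*K \<ge> 2*f1*(K-f1) + 2*f2*(K-f2)"
    and A: "A \<ge> x - 3*y" "A \<ge> 3*y - x"
  shows "3*A + 8*S \<ge> x + y"
proof (cases "f1 \<le> f2")
  case True
  have "f1*(K-f1) \<ge> 0" "f2*(K-f2) \<ge> 0" using f1 f2 by simp_all
  hence "S*K \<ge> 0" using S by linarith
  hence S0: "S \<ge> 0" using K by (simp add: zero_le_mult_iff)
  have "x \<le> y" using xy True by linarith
  then show ?thesis using A y S0 by linarith
next
  case False
  define e where "e = f1 - f2"
  have e0: "e > 0" "e \<le> K" using False f1 f2 by (auto simp: e_def)
  have "f1*(K-f1) + f2*(K-f2) - e*(K-e) = 2*f2*(K-f1)" by (simp add: e_def algebra_simps)
  moreover have "2*f2*(K-f1) \<ge> 0" using f1 f2 by simp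
  ultimately have SK: "S*K \<ge> 2*e*(K-e)" using S by linarith
  have xe: "x = y + 2*e" using xy by (simp add: e_def)
  have yK: "y \<le> 2*K - 2*e" using x xe by linarith
  show ?thesis
  proof (cases "y \<ge> e")
    case True
    have "e \<le> 2*K/3" using True yK by linarith
    hence "K/4 \<le> K - e" using K by linarith
      hence "e*(K/4) \<le> e*(K-e)" using e0 by (intro mult_left_mono) auto
      hence "2*e*(K-e) \<ge> e*K/2" by (simp add: algebra_simps)
    hence "S*K \<ge> (e/2)*K" using SK by linarith
    hence "S \<ge> e/2" using K by simp
    then show ?thesis using A True xe by linarith
  next
    case False
    show ?thesis
    proof (cases "e \<le> 2*K/3")
      case True
      hence "K/4 \<le> K - e" using K by linarith
      hence "e*(K/4) \<le> e*(K-e)" using e0 by (intro mult_left_mono) auto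
      hence "2*e*(K-e) \<ge> e*K/2" by (simp add: algebra_simps)
      hence "S*K \<ge> (e/2)*K" using SK by linarith
      hence "S \<ge> e/2" using K by simp
      then show ?thesis using A False xe y by linarith
    next
      case False2: False
      have a1: "(K-e)*(K-e) \<le> (K/3)*(K/3)" using False2 e0 by (intro mult_mono) auto
      have a2: "e*K \<ge> (2*K/3)*K" using False2 K by (intro mult_right_mono) auto
      have a1': "8*(K*K) + 9*(e*e) \<le> 18*(K*e)" using a1 by (simp add: algebra_simps)
      have "e*e \<ge> 0" by simp
      hence q0: "8*(K*K) + 8*(e*e) \<le> 18*(K*e)" using a1' by linarith
      have q: "8*e*(K-e) \<ge> K*(8*K - 10*e)" using q0 by (simp add: algebra_simps)
      hence "4*S*K \<ge> (8*K - 10*e)*K" using SK by (simp add: algebra_simps)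
      hence "4*S \<ge> 8*K - 10*e" using K by simp
      then show ?thesis using A False xe yK by linarith
    qed
  qed
qed


lemma swings_cnt: "swings n \<chi> i = cnt ({1..n} - {i}) (\<lambda>U. \<not> \<chi> U \<and> \<chi> (insert i U))"
  unfolding swings_def cnt_def by simp

theorem mainTheorem7:
  fixes n :: nat and \<chi> :: "nat set \<Rightarrow> bool" and d :: "nat \<Rightarrow> real"
  assumes "n \<ge> 2"
    and "d = (\<lambda>i. if i = 1 then 3/4 else if i = 2 then 1/4 else 0)"
    and "simple_game n \<chi>"
  shows "(\<Sum>i\<in>{1..n}. \<bar>banzhaf n \<chi> i - d i\<bar>) \<ge> 1/9"
proof -
  define N where "N = {1..n}"
  define M where "M = N - {1} - {2}"
  have fN: "finite N" by (simp add: N_def)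
  have fM: "finite M" using fN by (simp add: M_def)
  have n1: "1 \<in> N" and n2: "2 \<in> N" using assms(1) by (auto simp: N_def)
  have mono: "\<And>S T. S \<subseteq> T \<Longrightarrow> T \<subseteq> N \<Longrightarrow> \<chi> S \<Longrightarrow> \<chi> T"
    using assms(3) unfolding simple_game_def N_def by blast
  have monoins: "\<chi> (insert a U)" if "U \<subseteq> N" "a \<in> N" "\<chi> U" for U a
    using mono[of U "insert a U"] that by auto
  have M1: "1 \<notin> M" and M2: "2 \<notin> M" and MN: "M \<subseteq> N" by (auto simp: M_def)
  define K :: real where "K = 2 ^ card M"
  have K0: "K > 0" by (simp add: K_def)
  define G1 where "G1 = (\<lambda>U. \<chi> (insert 1 U))"
  define G2 where "G2 = (\<lambda>U. \<chi> (insert 2 U))"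
  define f0 where "f0 = cnt M \<chi>"
  define f1 where "f1 = cnt M G1"
  define f2 where "f2 = cnt M G2"
  define f12 where "f12 = cnt M (\<lambda>U. \<chi> (insert 1 (insert 2 U)))"
  have fle: "real (cnt M P) \<le> K" for P
    using cnt_le[OF fM, of P] unfolding K_def by (simp add: of_nat_le_iff[symmetric])
  define \<eta> where "\<eta> = (\<lambda>i. swings n \<chi> i)"
  have e1: "int (\<eta> 1) = int f1 - int f0 + int f12 - int f2"
  proof -
    have "\<eta> 1 = cnt (N - {1}) (\<lambda>U. \<not> \<chi> U \<and> \<chi> (insert 1 U))"
      by (simp add: \<eta>_def swings_cnt N_def)
    also have "\<dots> = cnt M (\<lambda>U. \<not> \<chi> U \<and> \<chi> (insert 1 U))
        + cnt M (\<lambda>U. \<not> \<chi> (insert 2 U) \<and> \<chi> (insert 1 (insert 2 U)))"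
      using cnt_split[of "N - {1}" 2] fN n2 by (simp add: M_def)
    finally have "int (\<eta> 1) = int (cnt M (\<lambda>U. \<not> \<chi> U \<and> G1 U))
        + int (cnt M (\<lambda>U. \<not> G2 U \<and> \<chi> (insert 1 (insert 2 U))))"
      by (simp add: G1_def G2_def)
    also have "int (cnt M (\<lambda>U. \<not> \<chi> U \<and> G1 U)) = int f1 - int f0"
      unfolding f1_def f0_def
      by (rule cnt_diff[OF fM]) (use MN n1 n2 in \<open>auto simp: G1_def intro!: monoins\<close>)
    also have "int (cnt M (\<lambda>U. \<not> G2 U \<and> \<chi> (insert 1 (insert 2 U)))) = int f12 - int f2"
      unfolding f12_def f2_def
      by (rule cnt_diff[OF fM]) (use MN n1 n2 in \<open>auto simp: G2_def intro!: monoins\<close>)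
    finally show ?thesis by simp
  qed
  have e2: "int (\<eta> 2) = int f2 - int f0 + int f12 - int f1"
  proof -
    have "\<eta> 2 = cnt (N - {2}) (\<lambda>U. \<not> \<chi> U \<and> \<chi> (insert 2 U))"
      by (simp add: \<eta>_def swings_cnt N_def)
    also have "\<dots> = cnt M (\<lambda>U. \<not> \<chi> U \<and> \<chi> (insert 2 U))
        + cnt M (\<lambda>U. \<not> \<chi> (insert 1 U) \<and> \<chi> (insert 2 (insert 1 U)))"
      using cnt_split[of "N - {2}" 1] fN n1 by (simp add: M_def Diff_insert2[symmetric] insert_commute)
    finally have "int (\<eta> 2) = int (cnt M (\<lambda>U. \<not> \<chi> U \<and> G2 U))
        + int (cnt M (\<lambda>U. \<not> G1 U \<and> \<chi> (insert 1 (insert 2 U))))"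
      by (simp add: G1_def G2_def insert_commute)
    also have "int (cnt M (\<lambda>U. \<not> \<chi> U \<and> G2 U)) = int f2 - int f0"
      unfolding f2_def f0_def
      by (rule cnt_diff[OF fM]) (use MN n1 n2 in \<open>auto simp: G2_def intro!: monoins\<close>)
    also have "int (cnt M (\<lambda>U. \<not> G1 U \<and> \<chi> (insert 1 (insert 2 U)))) = int f12 - int f1"
      unfolding f12_def f1_def
      by (rule cnt_diff[OF fM]) (metis G1_def MN insert_commute insert_subset monoins n1 n2 subset_trans)
    finally show ?thesis by simp
  qed
  have ej: "\<eta> j \<ge> cnt (M - {j}) (\<lambda>U. G1 U \<noteq> G1 (insert j U)) + cnt (M - {j}) (\<lambda>U. G2 U \<noteq> G2 (insert j U))"
    if j: "j \<in> M" for j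
  proof -
    define P where "P = (\<lambda>U. \<not> \<chi> U \<and> \<chi> (insert j U))"
    have jN: "j \<in> N" and j1: "j \<noteq> 1" and j2: "j \<noteq> 2" using j by (auto simp: M_def)
    have eqM: "N - {j} - {1} - {2} = M - {j}" by (auto simp: M_def)
    have "\<eta> j = cnt (N - {j}) P" by (simp add: \<eta>_def swings_cnt N_def P_def)
    also have "\<dots> = cnt (N - {j} - {1}) P + cnt (N - {j} - {1}) (\<lambda>U. P (insert 1 U))"
      using cnt_split[of "N - {j}" 1] fN n1 j1 by simp
    also have "cnt (N - {j} - {1}) P = cnt (M - {j}) P + cnt (M - {j}) (\<lambda>U. P (insert 2 U))"
      using cnt_split[of "N - {j} - {1}" 2 P] fN n2 j2 eqM by simp
    also have "cnt (N - {j} - {1}) (\<lambda>U. P (insert 1 U)) = cnt (M - {j}) (\<lambda>U. P (insert 1 U)) + cnt (M - {j}) (\<lambda>U. P (insert 1 (insert 2 U)))"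
      using cnt_split[of "N - {j} - {1}" 2 "\<lambda>U. P (insert 1 U)"] fN n2 j2 eqM by simp
    finally have le: "cnt (M - {j}) (\<lambda>U. P (insert 2 U)) + cnt (M - {j}) (\<lambda>U. P (insert 1 U)) \<le> \<eta> j" by simp
    have c1: "cnt (M - {j}) (\<lambda>U. P (insert 1 U)) = cnt (M - {j}) (\<lambda>U. G1 U \<noteq> G1 (insert j U))"
    proof (rule cnt_cong)
      fix U assume U: "U \<subseteq> M - {j}"
      have "insert 1 U \<subseteq> insert 1 (insert j U)" "insert 1 (insert j U) \<subseteq> N" using U MN n1 jN by auto
      then show "P (insert 1 U) = (G1 U \<noteq> G1 (insert j U))"
        unfolding P_def G1_def using mono by (metis insert_commute)
    qed
    have c2: "cnt (M - {j}) (\<lambda>U. P (insert 2 U)) = cnt (M - {j}) (\<lambda>U. G2 U \<noteq> G2 (insert j U))"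
    proof (rule cnt_cong)
      fix U assume U: "U \<subseteq> M - {j}"
      have "insert 2 U \<subseteq> insert 2 (insert j U)" "insert 2 (insert j U) \<subseteq> N" using U MN n2 jN by auto
      then show "P (insert 2 U) = (G2 U \<noteq> G2 (insert j U))"
        unfolding P_def G2_def using mono by (metis insert_commute)
    qed
    show ?thesis using le c1 c2 by simp
  qed
  define S where "S = (\<Sum>j\<in>M. real (\<eta> j))"
  have Sbd: "S \<ge> real (bd M G1) + real (bd M G2)"
  proof -
    have "real (bd M G1) + real (bd M G2) = (\<Sum>j\<in>M. real (cnt (M - {j}) (\<lambda>U. G1 U \<noteq> G1 (insert j U)) + cnt (M - {j}) (\<lambda>U. G2 U \<noteq> G2 (insert j U))))"
      unfolding bd_def by (simp add: sum.distrib)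
    also have "\<dots> \<le> S" unfolding S_def
      by (rule sum_mono) (use ej in \<open>simp only: of_nat_le_iff\<close>)
    finally show ?thesis .
  qed
  have p1: "2 * real f1 * (K - real f1) \<le> real (bd M G1) * K"
    using poincare[OF fM, of G1] by (simp add: K_def f1_def)
  have p2: "2 * real f2 * (K - real f2) \<le> real (bd M G2) * K"
    using poincare[OF fM, of G2] by (simp add: K_def f2_def)
  have SK: "S * K \<ge> 2 * real f1 * (K - real f1) + 2 * real f2 * (K - real f2)"
  proof -
    have "(real (bd M G1) + real (bd M G2)) * K \<le> S * K" using Sbd K0 by (intro mult_right_mono) auto
    then show ?thesis using p1 p2 by (simp add: algebra_simps)
  qed
  define x where "x = real (\<eta> 1)"
  define y where "y = real (\<eta> 2)"
  have x_eq: "x = real f1 - real f0 + real f12 - real f2"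
    using arg_cong[OF e1, of real_of_int] by (simp add: x_def)
  have y_eq: "y = real f2 - real f0 + real f12 - real f1"
    using arg_cong[OF e2, of real_of_int] by (simp add: y_def)
  have xy: "x - y = 2 * real f1 - 2 * real f2" using x_eq y_eq by simp
  have x2K: "x \<le> 2 * K" using x_eq fle[of G1] fle[of "\<lambda>U. \<chi> (insert 1 (insert 2 U))"]
    unfolding f1_def f12_def by simp
  have y0: "y \<ge> 0" by (simp add: y_def)
  have S0: "S \<ge> 0" by (simp add: S_def sum_nonneg)
  have Nsplit: "N = insert 1 (insert 2 M)" using n1 n2 by (auto simp: M_def)
  have sumN: "(\<Sum>i\<in>N. F i) = F 1 + F 2 + (\<Sum>i\<in>M. F i)" for F :: "nat \<Rightarrow> real"
    using fM M1 M2 by (simp add: Nsplit)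
  define H where "H = (\<Sum>k\<in>{1..n}. real (swings n \<chi> k))"
  have H_eq: "H = x + y + S"
    unfolding H_def N_def[symmetric] using sumN[of "\<lambda>k. real (swings n \<chi> k)"]
    by (simp add: x_def y_def S_def \<eta>_def)
  have bz: "banzhaf n \<chi> i = real (\<eta> i) / H" for i
    by (simp add: banzhaf_def H_def \<eta>_def)
  have dM: "d j = 0" if "j \<in> M" for j using that M1 M2 assms(2) by auto
  have goal_eq: "(\<Sum>i\<in>{1..n}. \<bar>banzhaf n \<chi> i - d i\<bar>) = \<bar>x/H - 3/4\<bar> + \<bar>y/H - 1/4\<bar> + (\<Sum>j\<in>M. \<bar>real (\<eta> j) / H\<bar>)"
  proof -
    have sM0: "(\<Sum>i\<in>M. \<bar>banzhaf n \<chi> i - d i\<bar>) = (\<Sum>j\<in>M. \<bar>real (\<eta> j) / H\<bar>)"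
      by (rule sum.cong[OF refl]) (simp add: bz dM)
    show ?thesis unfolding N_def[symmetric] sumN sM0 by (simp add: bz assms(2) x_def y_def)
  qed
  show ?thesis
  proof (cases "H = 0")
    case True
    then show ?thesis unfolding goal_eq by simp
  next
    case False
    hence Hpos: "H > 0" using H_eq x_def y0 S0 by (simp add: x_def) 
    have sM: "(\<Sum>j\<in>M. \<bar>real (\<eta> j) / H\<bar>) = S / H"
      using Hpos by (simp add: S_def sum_divide_distrib)
    define a where "a = x - 3*H/4"
    define b where "b = y - H/4"
    obtain aa where aa: "aa = \<bar>a\<bar>" by blast
    obtain bb where bb: "bb = \<bar>b\<bar>" by blast
    have aa1: "aa \<ge> a" "aa \<ge> -a" using aa by auto
    have bb1: "bb \<ge> b" "bb \<ge> -b" using bb by auto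
    have ab: "a - 3*b = x - 3*y" by (simp add: a_def b_def)
    have key: "3*(aa + 3*bb) + 8*S \<ge> x + y"
    proof -
    have fl1: "real f1 \<le> K" "real f2 \<le> K" using fle unfolding f1_def f2_def by auto
    show ?thesis
    proof (rule real_ineq[OF K0 xy y0 x2K _ fl1(1) _ fl1(2) SK])
      show "x - 3*y \<le> aa + 3*bb" using aa1 bb1 ab by linarith
      show "3*y - x \<le> aa + 3*bb" using aa1 bb1 ab by linarith
    qed simp_all
    qed
    have key': "3*aa + 9*bb + 8*S \<ge> x + y" using key by (simp add: algebra_simps)
    have "9*aa + 9*bb + 9*S \<ge> H" using key' H_eq aa1 bb1 by linarith
    hence "9*(aa + bb + S) \<ge> H" by (simp add: algebra_simps)
    hence "(aa + bb + S)/H \<ge> 1/9" using Hpos by (simp add: field_simps)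
    moreover have "\<bar>x/H - 3/4\<bar> = aa/H"
    proof -
      have "x/H - 3/4 = a/H" using Hpos by (simp add: a_def field_simps)
      then show ?thesis using Hpos by (simp add: aa abs_divide)
    qed
    moreover have "\<bar>y/H - 1/4\<bar> = bb/H"
    proof -
      have "y/H - 1/4 = b/H" using Hpos by (simp add: b_def field_simps)
      then show ?thesis using Hpos by (simp add: bb abs_divide)
    qed
    ultimately show ?thesis unfolding goal_eq sM by (simp add: add_divide_distrib)
  qed
qed

end
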